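(* Let $c \geq 1$ and let $g : (0,1] \rightarrow \mathbb{R}^+$ be non-increasing such that $$\frac{1}{t}\int_0^t g(u)\,du \leq c\, g(t) \quad \text{for every } t \in (0,1].$$ Then for every $\delta \in (0,1]$ and every $p$ with $1 \leq p < \frac{c}{c-1}$ (interpreted as $p\ge 1$ arbitrary when $c=1$), $$\frac{1}{\delta}\int_0^\delta g^p \leq \frac{1}{c^{p-1}(c+p-pc)}\left(\frac{1}{\delta}\int_0^\delta g\right)^p.$$ Moreover the inequality is sharp: for each such $c$ and $p$, the constant $\frac{1}{c^{p-1}(c+p-pc)}$ cannot be replaced by any smaller number. *)

theory Defs
  imports "HOL-Analysis.Analysis"
begin

definition admissible :: "real \<Rightarrow> (real \<Rightarrow> real) \<Rightarrow> bool" where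
  "admissible c g \<longleftrightarrow>
     (\<forall>t\<in>{0<..1}. g t > 0) \<and>
     (\<forall>s\<in>{0<..1}. \<forall>t\<in>{0<..1}. s \<le> t \<longrightarrow> g t \<le> g s) \<and>
     (\<forall>t\<in>{0<..1}. set_integrable lborel {0<..t} g \<and>
        (1 / t) * (LBINT u:{0<..t}. g u) \<le> c * g t)"

definition power_avg_ineq :: "real \<Rightarrow> real \<Rightarrow> (real \<Rightarrow> real) \<Rightarrow> real \<Rightarrow> bool" where
  "power_avg_ineq K p g \<delta> \<longleftrightarrow>
     set_integrable lborel {0<..\<delta>} (\<lambda>u. g u powr p) \<and>
     (1 / \<delta>) * (LBINT u:{0<..\<delta>}. g u powr p)
        \<le> K * ((1 / \<delta>) * (LBINT u:{0<..\<delta>}. g u)) powr p"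

end

theory Submission
  imports Defs
begin

lemma level_bound:
  fixes f :: "real \<Rightarrow> real"
  assumes [measurable]: "f \<in> borel_measurable borel"
  assumes dpos: "\<delta> > 0" and cpos: "c > 0" and apos: "a > 0" and fd: "f \<delta> = a"
  assumes mono: "\<And>s t. 0 < s \<Longrightarrow> s \<le> t \<Longrightarrow> t \<le> \<delta> \<Longrightarrow> f t \<le> f s"
  assumes hyp: "\<And>t. t \<in> {0<..\<delta>} \<Longrightarrow> (\<integral>\<^sup>+x. ennreal (indicator {0<..t} x * f x) \<partial>lborel) \<le> ennreal (c * t * f t)"
  assumes sa: "a \<le> s"
  shows "(\<integral>\<^sup>+t. ennreal (indicator {t. t \<in> {0<..\<delta>} \<and> s \<le> f t} t * f t) \<partial>lborel)
          \<le> ennreal (c * s) * emeasure lborel {t. t \<in> {0<..\<delta>} \<and> s \<le> f t}"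
proof -
  define S where "S = {t. t \<in> {0<..\<delta>} \<and> s \<le> f t}"
  define T where "T = {t. t \<in> {0<..\<delta>} \<and> f t < s}"
  have Smeas: "S \<in> sets lborel" unfolding S_def by measurable
  show ?thesis
  proof (cases "T = {}")
    case True
    then have SI: "S = {0<..\<delta>}" unfolding S_def T_def by force
    have "(\<integral>\<^sup>+t. ennreal (indicator S t * f t) \<partial>lborel) \<le> ennreal (c * \<delta> * f \<delta>)"
      using hyp[of \<delta>] dpos SI by simp
    also have "\<dots> \<le> ennreal (c * s * \<delta>)"
      using fd sa cpos dpos by (intro ennreal_leI) (simp add: mult_left_mono mult_right_mono)
    also have "\<dots> = ennreal (c * s) * emeasure lborel S"
      using SI cpos dpos sa apos by (simp add: ennreal_mult)
    finally show ?thesis unfolding S_def .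
  next
    case False
    define \<tau> where "\<tau> = Inf T"
    have Tbdd: "bdd_below T" unfolding T_def by (rule bdd_belowI[of _ 0]) auto
    have tau_le: "\<tau> \<le> t'" if "t' \<in> T" for t' unfolding \<tau>_def by (rule cInf_lower[OF that Tbdd])
    have tau_nn: "0 \<le> \<tau>" unfolding \<tau>_def using False by (intro cInf_greatest) (auto simp: T_def)
    obtain t0 where t0: "t0 \<in> T" using False by auto
    have tau_d: "\<tau> \<le> \<delta>" using tau_le[OF t0] t0 by (auto simp: T_def)
    have S_sub: "S \<subseteq> {0<..\<tau>}"
    proof
      fix t assume t: "t \<in> S"
      have "t \<le> \<tau>" unfolding \<tau>_def
      proof (rule cInf_greatest[OF False])
        fix t' assume t': "t' \<in> T"
        show "t \<le> t'"
        proof (rule ccontr)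
          assume "\<not> t \<le> t'"
          then have "f t \<le> f t'" using t t' by (intro mono) (auto simp: S_def T_def)
          then show False using t t' by (auto simp: S_def T_def)
        qed
      qed
      then show "t \<in> {0<..\<tau>}" using t by (auto simp: S_def)
    qed
    have sub_S: "{0<..<\<tau>} \<subseteq> S"
    proof
      fix t assume t: "t \<in> {0<..<\<tau>}"
      have "t \<notin> T" using t tau_le by force
      then show "t \<in> S" using t tau_d by (auto simp: S_def T_def)
    qed
    define J where "J = (\<integral>\<^sup>+x. ennreal (indicator {0<..\<tau>} x * f x) \<partial>lborel)"
    have J_le: "J \<le> ennreal (c * t' * s)" if "t' \<in> T" for t'
    proof -
      have "J \<le> (\<integral>\<^sup>+x. ennreal (indicator {0<..t'} x * f x) \<partial>lborel)"
        unfolding J_def using tau_le[OF that]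
        by (intro nn_integral_mono) (auto simp: indicator_def)
      also have "\<dots> \<le> ennreal (c * t' * f t')" using that by (intro hyp) (auto simp: T_def)
      also have "\<dots> \<le> ennreal (c * t' * s)" using that cpos
        by (intro ennreal_leI mult_left_mono) (auto simp: T_def)
      finally show ?thesis .
    qed
    have Jfin: "J \<noteq> \<infinity>" using J_le[OF t0] by (auto simp: top_unique)
    define r where "r = enn2real J"
    have Jr: "J = ennreal r" unfolding r_def using Jfin by (simp add: ennreal_enn2real_if)
    have r_nn: "0 \<le> r" unfolding r_def by simp
    have "r / (c * s) \<le> \<tau>" unfolding \<tau>_def
    proof (rule cInf_greatest[OF False])
      fix t' assume t': "t' \<in> T"
      have "0 < t'" using t' by (auto simp: T_def)
      then have "0 \<le> c * t' * s" using cpos apos sa by simp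
      then have "r \<le> c * t' * s" using J_le[OF t'] Jr r_nn by (auto simp: ennreal_le_iff2)
      then show "r / (c * s) \<le> t'" using cpos apos sa by (simp add: divide_le_eq mult_ac)
    qed
    then have "r \<le> c * s * \<tau>" using cpos apos sa by (simp add: divide_le_eq mult_ac)
    have "(\<integral>\<^sup>+t. ennreal (indicator S t * f t) \<partial>lborel) \<le> J"
      unfolding J_def using S_sub by (intro nn_integral_mono) (auto simp: indicator_def)
    also have "\<dots> \<le> ennreal (c * s * \<tau>)" using Jr \<open>r \<le> c * s * \<tau>\<close> by (simp add: ennreal_leI)
    also have "\<dots> = ennreal (c * s) * emeasure lborel {0<..<\<tau>}"
      using tau_nn cpos apos sa by (simp add: ennreal_mult)
    also have "\<dots> \<le> ennreal (c * s) * emeasure lborel S"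
      by (intro mult_left_mono emeasure_mono sub_S Smeas) auto
    finally show ?thesis unfolding S_def .
  qed
qed


lemma ftc_pow:
  fixes b e k :: real
  assumes apos: "0 < a" and ab: "a \<le> b" and that: "k \<ge> 0" "e > 0"
  shows "(\<integral>\<^sup>+s. ennreal (indicator {a..b} s * (k * e * s powr (e - 1))) \<partial>lborel) = ennreal (k * b powr e - k * a powr e)"
proof -
  have "(\<integral>\<^sup>+s. ennreal (k * e * s powr (e - 1)) * indicator {a..b} s \<partial>lborel) = ennreal (k * b powr e - k * a powr e)"
  proof (rule nn_integral_FTC_Icc)
    show "(\<lambda>s. k * e * s powr (e - 1)) \<in> borel_measurable borel" by measurable
    fix x assume x: "x \<in> {a..b}"
    then have "x > 0" using apos by auto
    show "((\<lambda>s. k * s powr e) has_real_derivative (k * e * x powr (e - 1))) (at x)"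
      by (rule DERIV_cong[OF DERIV_cmult[OF has_real_derivative_powr[OF \<open>x > 0\<close>]]]) (simp add: mult.assoc)
    show "0 \<le> k * e * x powr (e - 1)" using that by simp
  qed (use ab in auto)
  moreover have "(\<integral>\<^sup>+s. ennreal (indicator {a..b} s * (k * e * s powr (e - 1))) \<partial>lborel) = (\<integral>\<^sup>+s. ennreal (k * e * s powr (e - 1)) * indicator {a..b} s \<partial>lborel)"
    by (intro nn_integral_cong) (simp add: indicator_def)
  ultimately show ?thesis by simp
qed


lemma core:
  fixes f :: "real \<Rightarrow> real"
  assumes fm[measurable]: "f \<in> borel_measurable borel"
  assumes dpos: "\<delta> > 0" and cpos: "c > 0" and apos: "a > 0" and fd: "f \<delta> = a" and p1: "p > 1"
  assumes mono: "\<And>s t. 0 < s \<Longrightarrow> s \<le> t \<Longrightarrow> t \<le> \<delta> \<Longrightarrow> f t \<le> f s"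
  assumes hyp: "\<And>t. t \<in> {0<..\<delta>} \<Longrightarrow> (\<integral>\<^sup>+x. ennreal (indicator {0<..t} x * f x) \<partial>lborel) \<le> ennreal (c * t * f t)"
  shows "(\<integral>\<^sup>+t. ennreal (indicator {0<..\<delta>} t * (f t powr p - a powr (p-1) * f t)) \<partial>lborel)
     \<le> ennreal (c*(p-1)/p) * (\<integral>\<^sup>+t. ennreal (indicator {0<..\<delta>} t * (f t powr p - a powr p)) \<partial>lborel)"
proof -
  define I where "I = {0<..\<delta>::real}"
  define q where "q s = (p-1) * s powr (p-2)" for s :: real
  have qm[measurable]: "q \<in> borel_measurable borel" unfolding q_def by measurable
  have fa: "a \<le> f t" if "t \<in> I" for t using mono[of t \<delta>] that fd by (auto simp: I_def)
  have ftc1: "(\<integral>\<^sup>+s. ennreal (indicator {a..f t} s * (q s * f t)) \<partial>lborel) = ennreal (f t powr p - a powr (p-1) * f t)"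
    if "t \<in> I" for t
  proof -
    have "(\<integral>\<^sup>+s. ennreal (indicator {a..f t} s * (q s * f t)) \<partial>lborel) =
          (\<integral>\<^sup>+s. ennreal (indicator {a..f t} s * (f t * (p-1) * s powr ((p-1) - 1))) \<partial>lborel)"
      by (intro nn_integral_cong) (simp add: q_def algebra_simps)
    also have "\<dots> = ennreal (f t * f t powr (p-1) - f t * a powr (p-1))"
      using fa[OF that] apos p1 by (intro ftc_pow) auto
    also have "f t * f t powr (p-1) = f t powr p"
      using fa[OF that] apos by (subst powr_mult_base) auto
    finally show ?thesis by (simp add: mult.commute)
  qed
  have ftc2: "(\<integral>\<^sup>+s. ennreal (indicator {a..f t} s * (q s * (c * s))) \<partial>lborel) = ennreal (c*(p-1)/p * (f t powr p - a powr p))"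
    if "t \<in> I" for t
  proof -
    have "(\<integral>\<^sup>+s. ennreal (indicator {a..f t} s * (q s * (c * s))) \<partial>lborel) =
          (\<integral>\<^sup>+s. ennreal (indicator {a..f t} s * (c*(p-1)/p * p * s powr (p - 1))) \<partial>lborel)"
    proof (intro nn_integral_cong)
      fix s :: real
      show "ennreal (indicator {a..f t} s * (q s * (c * s))) = ennreal (indicator {a..f t} s * (c*(p-1)/p * p * s powr (p - 1)))"
      proof (cases "s \<in> {a..f t}")
        case True
        then have "s > 0" using apos by auto
        then have "s powr (p-2) * s = s powr (p-1)"
          using powr_mult_base[of s "p-2"] by (simp add: mult.commute)
        moreover have "q s * (c * s) = c*(p-1) * (s powr (p-2) * s)" by (simp add: q_def algebra_simps)
        moreover have "c*(p-1)/p*p = c*(p-1)" using p1 by simp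
        ultimately have "q s * (c * s) = c*(p-1)/p * p * s powr (p - 1)" by simp
        then show ?thesis by simp
      qed simp
    qed
    also have "\<dots> = ennreal (c*(p-1)/p * f t powr p - c*(p-1)/p * a powr p)"
      using fa[OF that] apos p1 cpos by (intro ftc_pow) auto
    finally show ?thesis by (simp add: algebra_simps)
  qed
  define W where "W t s = ennreal (indicator I t * indicator {a..f t} s * (q s * f t))" for t s
  define W' where "W' t s = ennreal (indicator I t * indicator {a..f t} s * (q s * (c * s)))" for t s
  have Wm: "(\<lambda>(t,s). W t s) \<in> borel_measurable (lborel \<Otimes>\<^sub>M lborel)"
  proof -
    have "(\<lambda>(t,s). W t s) =
        (\<lambda>(t::real,s::real). ennreal (indicator I t * (if a \<le> s \<and> s \<le> f t then 1 else 0) * (q s * f t)))"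
      by (auto simp: indicator_def fun_eq_iff W_def)
    also have "\<dots> \<in> borel_measurable (lborel \<Otimes>\<^sub>M lborel)"
      unfolding I_def by measurable
    finally show ?thesis .
  qed
  have W'm: "(\<lambda>(t,s). W' t s) \<in> borel_measurable (lborel \<Otimes>\<^sub>M lborel)"
  proof -
    have "(\<lambda>(t,s). W' t s) =
        (\<lambda>(t::real,s::real). ennreal (indicator I t * (if a \<le> s \<and> s \<le> f t then 1 else 0) * (q s * (c * s))))"
      by (auto simp: indicator_def fun_eq_iff W'_def)
    also have "\<dots> \<in> borel_measurable (lborel \<Otimes>\<^sub>M lborel)"
      unfolding I_def by measurable
    finally show ?thesis .
  qed
  have "(\<integral>\<^sup>+t. ennreal (indicator I t * (f t powr p - a powr (p-1) * f t)) \<partial>lborel)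
      = (\<integral>\<^sup>+t. (\<integral>\<^sup>+s. W t s \<partial>lborel) \<partial>lborel)"
  proof (intro nn_integral_cong)
    fix t show "ennreal (indicator I t * (f t powr p - a powr (p-1) * f t)) = (\<integral>\<^sup>+s. W t s \<partial>lborel)"
      by (cases "t \<in> I") (simp_all add: W_def ftc1)
  qed
  also have "\<dots> = (\<integral>\<^sup>+s. (\<integral>\<^sup>+t. W t s \<partial>lborel) \<partial>lborel)"
    by (rule lborel_pair.Fubini'[symmetric]) (use Wm in simp)
  also have "\<dots> \<le> (\<integral>\<^sup>+s. (\<integral>\<^sup>+t. W' t s \<partial>lborel) \<partial>lborel)"
  proof (rule nn_integral_mono)
    fix s :: real assume "s \<in> space lborel"
    show "(\<integral>\<^sup>+t. W t s \<partial>lborel) \<le> (\<integral>\<^sup>+t. W' t s \<partial>lborel)"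
    proof (cases "a \<le> s")
      case False
      then show ?thesis by (simp add: W_def W'_def)
    next
      case True
      define S where "S = {t. t \<in> {0<..\<delta>} \<and> s \<le> f t}"
      have Smeas: "S \<in> sets lborel" unfolding S_def by measurable
      have sp: "s > 0" using True apos by auto
      have qp: "q s \<ge> 0" using p1 by (simp add: q_def)
      have "(\<integral>\<^sup>+t. W t s \<partial>lborel) = (\<integral>\<^sup>+t. ennreal (q s) * ennreal (indicator S t * f t) \<partial>lborel)"
      proof (intro nn_integral_cong)
        fix t show "W t s = ennreal (q s) * ennreal (indicator S t * f t)"
          using True qp by (auto simp: W_def S_def I_def indicator_def ennreal_mult'[symmetric] mult.commute)
      qed
      also have "\<dots> = ennreal (q s) * (\<integral>\<^sup>+t. ennreal (indicator S t * f t) \<partial>lborel)"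
        by (rule nn_integral_cmult) (unfold S_def, simp)
      also have "\<dots> \<le> ennreal (q s) * (ennreal (c * s) * emeasure lborel S)"
        unfolding S_def
        by (intro mult_left_mono level_bound[OF fm dpos cpos apos fd mono hyp True]) auto
      also have "\<dots> = (\<integral>\<^sup>+t. ennreal (q s * (c * s)) * indicator S t \<partial>lborel)"
        using qp cpos sp by (simp only: nn_integral_cmult_indicator[OF Smeas]) (simp add: ennreal_mult mult.assoc)
      also have "\<dots> = (\<integral>\<^sup>+t. W' t s \<partial>lborel)"
      proof (intro nn_integral_cong)
        fix t show "ennreal (q s * (c * s)) * indicator S t = W' t s"
          using True by (auto simp: W'_def S_def I_def indicator_def)
      qed
      finally show ?thesis .
    qed
  qed
  also have "\<dots> = (\<integral>\<^sup>+t. (\<integral>\<^sup>+s. W' t s \<partial>lborel) \<partial>lborel)"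
    by (rule lborel_pair.Fubini') (use W'm in simp)
  also have "\<dots> = (\<integral>\<^sup>+t. ennreal (c*(p-1)/p) * ennreal (indicator I t * (f t powr p - a powr p)) \<partial>lborel)"
  proof (intro nn_integral_cong)
    fix t show "(\<integral>\<^sup>+s. W' t s \<partial>lborel) = ennreal (c*(p-1)/p) * ennreal (indicator I t * (f t powr p - a powr p))"
      using cpos p1 by (cases "t \<in> I") (simp_all add: W'_def ftc2 ennreal_mult'[symmetric])
  qed
  also have "\<dots> = ennreal (c*(p-1)/p) * (\<integral>\<^sup>+t. ennreal (indicator I t * (f t powr p - a powr p)) \<partial>lborel)"
    by (rule nn_integral_cmult) (unfold I_def, measurable)
  finally show ?thesis unfolding I_def .
qed


lemma young_aux:
  fixes x A c p :: real
  assumes x: "x > 0" and A: "A \<ge> 0" and c: "c > 0" and p: "p > 1"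
  shows "x powr (p-1) * A \<le> c*(p-1)/p * x powr p + A powr p * c powr (1-p) / p"
proof -
  have q: "p/(p-1) > 1" using p by (simp add: field_simps)
  have "(c*x) powr (p-1) * A \<le> ((c*x) powr (p-1)) powr (p/(p-1)) / (p/(p-1)) + A powr p / p"
    by (rule Youngs_inequality[OF q p]) (use p A in \<open>auto simp: field_simps\<close>)
  also have "((c*x) powr (p-1)) powr (p/(p-1)) = (c*x) powr p"
    using p by (simp add: powr_powr)
  finally have 1: "c powr (p-1) * (x powr (p-1) * A) \<le> c powr p * x powr p * ((p-1)/p) + A powr p / p"
    using c x by (simp add: powr_mult mult_ac)
  have cp: "c powr p = c * c powr (p-1)" using c powr_mult_base[of c "p-1"] by simp
  have pos: "c powr (p-1) > 0" using c by simp
  have "c powr (p-1) * (x powr (p-1) * A) \<le> c powr (p-1) * (c*(p-1)/p * x powr p + A powr p * c powr (1-p) / p)"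
  proof -
    have e: "c powr (1-p) * c powr (p-1) = 1" using c by (simp add: powr_add[symmetric])
    have "c powr (p-1) * (c*(p-1)/p * x powr p + A powr p * c powr (1-p) / p)
       = c powr p * x powr p * ((p-1)/p) + A powr p * (c powr (1-p) * c powr (p-1)) / p"
      using cp by (simp add: algebra_simps)
    also have "\<dots> = c powr p * x powr p * ((p-1)/p) + A powr p / p" using e by simp
    finally show ?thesis using 1 by simp
  qed
  then show ?thesis using pos by simp
qed


lemma core_real:
  fixes f :: "real \<Rightarrow> real"
  assumes fm[measurable]: "f \<in> borel_measurable borel"
  assumes dpos: "\<delta> > 0" and cpos: "c > 0" and apos: "a > 0" and fd: "f \<delta> = a" and p1: "p > 1"
  assumes kap: "c * (p - 1) < p"
  assumes mono: "\<And>s t. 0 < s \<Longrightarrow> s \<le> t \<Longrightarrow> t \<le> \<delta> \<Longrightarrow> f t \<le> f s"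
  assumes hyp: "\<And>t. t \<in> {0<..\<delta>} \<Longrightarrow> (\<integral>\<^sup>+x. ennreal (indicator {0<..t} x * f x) \<partial>lborel) \<le> ennreal (c * t * f t)"
  assumes bnd: "\<And>t. t \<in> {0<..\<delta>} \<Longrightarrow> f t \<le> M"
  shows "integrable lborel (\<lambda>t. indicator {0<..\<delta>} t * f t powr p)"
    "integrable lborel (\<lambda>t. indicator {0<..\<delta>} t * f t)"
    "(\<integral>t. indicator {0<..\<delta>} t * f t powr p \<partial>lborel) \<le>
        \<delta> / (c powr (p-1) * (c + p - p*c)) * ((\<integral>t. indicator {0<..\<delta>} t * f t \<partial>lborel)/\<delta>) powr p"
proof -
  define I where "I = {0<..\<delta>::real}"
  have Im: "I \<in> sets lborel" unfolding I_def by simp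
  have Ifin: "emeasure lborel I < \<infinity>" unfolding I_def using dpos by simp
  have fa: "a \<le> f t" if "t \<in> I" for t using mono[of t \<delta>] that fd by (auto simp: I_def)
  have intI: "integrable lborel (\<lambda>t. indicator I t :: real)" using Im Ifin by simp
  have int_b: "integrable lborel (\<lambda>t. indicator I t * f t powr p)"
  proof (rule Bochner_Integration.integrable_bound[OF integrable_mult_left[OF intI, of "M powr p"]])
    show "(\<lambda>t. indicator I t * f t powr p) \<in> borel_measurable lborel" unfolding I_def by simp
    show "AE t in lborel. norm (indicator I t * f t powr p) \<le> norm (indicator I t * M powr p)"
    proof (intro AE_I2)
      fix t show "norm (indicator I t * f t powr p) \<le> norm (indicator I t * M powr p)"
      proof (cases "t \<in> I")
        case True
        have "f t powr p \<le> M powr p" using fa[OF True] bnd[of t] True apos p1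
          by (intro powr_mono2) (auto simp: I_def)
        then show ?thesis using True fa[OF True] apos by simp
      qed simp
    qed
  qed
  have int_a: "integrable lborel (\<lambda>t. indicator I t * f t)"
  proof (rule Bochner_Integration.integrable_bound[OF integrable_mult_left[OF intI, of "M"]])
    show "(\<lambda>t. indicator I t * f t) \<in> borel_measurable lborel" unfolding I_def by simp
    show "AE t in lborel. norm (indicator I t * f t) \<le> norm (indicator I t * M)"
    proof (intro AE_I2)
      fix t show "norm (indicator I t * f t) \<le> norm (indicator I t * M)"
      proof (cases "t \<in> I")
        case True
        then show ?thesis using True fa[OF True] apos bnd[of t] by (simp add: I_def)
      qed simp
    qed
  qed
  then show "integrable lborel (\<lambda>t. indicator {0<..\<delta>} t * f t)" unfolding I_def .
  from int_b show "integrable lborel (\<lambda>t. indicator {0<..\<delta>} t * f t powr p)" unfolding I_def .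
  define X where "X = (\<integral>t. indicator I t * f t powr p \<partial>lborel)"
  define F where "F = (\<integral>t. indicator I t * f t \<partial>lborel)"
  have L: "(\<integral>\<^sup>+t. ennreal (indicator I t * (f t powr p - a powr (p-1) * f t)) \<partial>lborel) = ennreal (X - a powr (p-1) * F)"
  proof -
    have eq: "(\<lambda>t. indicator I t * (f t powr p - a powr (p-1) * f t)) = (\<lambda>t. indicator I t * f t powr p - a powr (p-1) * (indicator I t * f t))"
      by (simp add: fun_eq_iff algebra_simps)
    have int: "integrable lborel (\<lambda>t. indicator I t * (f t powr p - a powr (p-1) * f t))"
      unfolding eq using int_a int_b by simp
    have nn: "AE t in lborel. 0 \<le> indicator I t * (f t powr p - a powr (p-1) * f t)"
    proof (intro AE_I2)
      fix t show "0 \<le> indicator I t * (f t powr p - a powr (p-1) * f t)"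
      proof (cases "t \<in> I")
        case True
        have "a powr (p-1) \<le> f t powr (p-1)" using fa[OF True] apos p1 by (intro powr_mono2) auto
        then have "a powr (p-1) * f t \<le> f t powr (p-1) * f t" using fa[OF True] apos by (intro mult_right_mono) auto
        also have "\<dots> = f t powr p" using fa[OF True] apos powr_mult_base[of "f t" "p-1"] by (simp add: mult.commute)
        finally show ?thesis using True by simp
      qed simp
    qed
    have "(\<integral>\<^sup>+t. ennreal (indicator I t * (f t powr p - a powr (p-1) * f t)) \<partial>lborel) = ennreal (\<integral>t. indicator I t * (f t powr p - a powr (p-1) * f t) \<partial>lborel)"
      by (rule nn_integral_eq_integral[OF int nn])
    also have "(\<integral>t. indicator I t * (f t powr p - a powr (p-1) * f t) \<partial>lborel) = X - a powr (p-1) * F"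
      unfolding eq X_def F_def using int_a int_b by simp
    finally show ?thesis .
  qed
  have R: "(\<integral>\<^sup>+t. ennreal (indicator I t * (f t powr p - a powr p)) \<partial>lborel) = ennreal (X - a powr p * \<delta>)"
  proof -
    have eq: "(\<lambda>t. indicator I t * (f t powr p - a powr p)) = (\<lambda>t. indicator I t * f t powr p - a powr p * indicator I t)"
      by (simp add: fun_eq_iff algebra_simps)
    have int: "integrable lborel (\<lambda>t. indicator I t * (f t powr p - a powr p))"
      unfolding eq using intI int_b by simp
    have nn: "AE t in lborel. 0 \<le> indicator I t * (f t powr p - a powr p)"
    proof (intro AE_I2)
      fix t show "0 \<le> indicator I t * (f t powr p - a powr p)"
      proof (cases "t \<in> I")
        case True
        have "a powr p \<le> f t powr p" using fa[OF True] apos p1 by (intro powr_mono2) auto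
        then show ?thesis using True by simp
      qed simp
    qed
    have "(\<integral>\<^sup>+t. ennreal (indicator I t * (f t powr p - a powr p)) \<partial>lborel) = ennreal (\<integral>t. indicator I t * (f t powr p - a powr p) \<partial>lborel)"
      by (rule nn_integral_eq_integral[OF int nn])
    also have "(\<integral>t. indicator I t * (f t powr p - a powr p) \<partial>lborel) = X - a powr p * \<delta>"
      unfolding eq X_def using intI int_b dpos by (simp add: I_def)
    finally show ?thesis .
  qed
  have Rnn: "0 \<le> X - a powr p * \<delta>"
  proof -
    have "a powr p * \<delta> = (\<integral>t. a powr p * indicator I t \<partial>lborel)" using dpos by (simp add: I_def)
    also have "\<dots> \<le> X" unfolding X_def
    proof (intro integral_mono)
      show "integrable lborel (\<lambda>t. a powr p * indicator I t)" using intI by simp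
      show "integrable lborel (\<lambda>t. indicator I t * f t powr p)" by (rule int_b)
      fix t show "a powr p * indicator I t \<le> indicator I t * f t powr p"
      proof (cases "t \<in> I")
        case True
        have "a powr p \<le> f t powr p" using fa[OF True] apos p1 by (intro powr_mono2) auto
        then show ?thesis using True by simp
      qed simp
    qed
    finally show ?thesis by simp
  qed
  have C: "ennreal (X - a powr (p-1) * F) \<le> ennreal (c*(p-1)/p) * ennreal (X - a powr p * \<delta>)"
    using core[OF fm dpos cpos apos fd p1 mono hyp] L R unfolding I_def by simp
  have main: "X - a powr (p-1) * F \<le> c*(p-1)/p * (X - a powr p * \<delta>)"
  proof -
    have k0: "0 \<le> c*(p-1)/p" using cpos p1 by simp
    have "ennreal (X - a powr (p-1) * F) \<le> ennreal (c*(p-1)/p * (X - a powr p * \<delta>))"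
      using C k0 Rnn by (simp only: ennreal_mult[OF k0 Rnn])
    moreover have "0 \<le> c*(p-1)/p * (X - a powr p * \<delta>)" using k0 Rnn by (rule mult_nonneg_nonneg)
    ultimately show ?thesis by (simp add: ennreal_le_iff)
  qed
  have Fnn: "0 \<le> F" unfolding F_def using fa apos
    by (intro integral_nonneg_AE AE_I2) (auto simp: indicator_def intro: order_trans[OF less_imp_le])
  define A where "A = F / \<delta>"
  have A0: "A \<ge> 0" unfolding A_def using Fnn dpos by simp
  have Y: "a powr (p-1) * A \<le> c*(p-1)/p * a powr p + A powr p * c powr (1-p) / p"
    by (rule young_aux[OF apos A0 cpos p1])
  have FA: "F = \<delta> * A" unfolding A_def using dpos by simp
  have gen: "(1 - k) * X \<le> a powr (p-1) * F - k * a powr p * \<delta>"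
    if "X - a powr (p-1) * F \<le> k * (X - a powr p * \<delta>)" for k using that by (simp add: algebra_simps)
  have "(1 - c*(p-1)/p) * X \<le> a powr (p-1) * F - c*(p-1)/p * a powr p * \<delta>"
    by (rule gen[OF main])
  also have "\<dots> = \<delta> * (a powr (p-1) * A - c*(p-1)/p * a powr p)" unfolding FA by (simp add: algebra_simps)
  also have "\<dots> \<le> \<delta> * (A powr p * c powr (1-p) / p)"
    using Y dpos by (intro mult_left_mono) auto
  finally have Z: "(1 - c*(p-1)/p) * X \<le> \<delta> * (A powr p * c powr (1-p) / p)" .
  have D: "1 - c*(p-1)/p = (c + p - p*c) / p" using p1 by (simp add: field_simps)
  have Dpos: "c + p - p*c > 0" using kap by (simp add: algebra_simps)
  have "X \<le> \<delta> * (A powr p * c powr (1-p) / p) / ((c + p - p*c) / p)"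
    using Z D Dpos p1 by (simp add: le_divide_eq mult.commute)
  also have "\<dots> = \<delta> / (c powr (p-1) * (c + p - p*c)) * A powr p"
  proof -
    have cm: "c powr (1-p) = 1 / c powr (p-1)" using powr_minus_divide[of c "p-1"] by simp
    have "c powr (p-1) > 0" using cpos by simp
    then show ?thesis unfolding cm using p1 Dpos by (simp add: field_simps)
  qed
  finally show "(\<integral>t. indicator {0<..\<delta>} t * f t powr p \<partial>lborel) \<le>
        \<delta> / (c powr (p-1) * (c + p - p*c)) * ((\<integral>t. indicator {0<..\<delta>} t * f t \<partial>lborel)/\<delta>) powr p"
    unfolding X_def A_def F_def I_def .
qed


lemma main_ineq:
  fixes c p :: real and g :: "real \<Rightarrow> real"
  assumes c1: "c \<ge> 1" and p1: "p > 1" and kap: "c * (p - 1) < p"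
  assumes adm: "admissible c g" and dI: "\<delta> \<in> {0<..1}"
  shows "power_avg_ineq (1 / (c powr (p - 1) * (c + p - p * c))) p g \<delta>"
proof -
  define K where "K = 1 / (c powr (p - 1) * (c + p - p * c))"
  define I where "I = {0<..\<delta>::real}"
  have cpos: "c > 0" using c1 by simp
  have dpos: "\<delta> > 0" and d1: "\<delta> \<le> 1" using dI by auto
  have gpos: "\<And>t. t \<in> {0<..1} \<Longrightarrow> g t > 0"
    and gmono: "\<And>s t. s \<in> {0<..1} \<Longrightarrow> t \<in> {0<..1} \<Longrightarrow> s \<le> t \<Longrightarrow> g t \<le> g s"
    and gint: "\<And>t. t \<in> {0<..1} \<Longrightarrow> set_integrable lborel {0<..t} g"
    and gavg: "\<And>t. t \<in> {0<..1} \<Longrightarrow> (1 / t) * (LBINT u:{0<..t}. g u) \<le> c * g t"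
    using adm unfolding admissible_def by auto
  define h where "h x = indicator {0<..1} x * g x" for x
  have hm[measurable]: "h \<in> borel_measurable borel"
    using gint[of 1] unfolding set_integrable_def h_def by (auto dest: borel_measurable_integrable)
  have hI: "h x = g x" if "x \<in> I" for x using that dI unfolding h_def I_def by auto
  define a where "a = g \<delta>"
  have apos: "a > 0" unfolding a_def using gpos dI by auto
  have ga: "a \<le> g t" if "t \<in> I" for t using gmono[of t \<delta>] that dI unfolding a_def I_def by auto
  define G where "G = (LBINT u:I. g u)"
  have Gint: "integrable lborel (\<lambda>x. indicator I x * g x)"
    using gint[OF dI] unfolding set_integrable_def I_def by simp
  have Geq: "G = (\<integral>x. indicator I x * g x \<partial>lborel)" unfolding G_def set_lebesgue_integral_def by simp
  have Dpos: "c + p - p*c > 0" using kap by (simp add: algebra_simps)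
  have Kpos: "K > 0" unfolding K_def using Dpos cpos by (intro divide_pos_pos mult_pos_pos) auto
  define B where "B = \<delta> * K * (G / \<delta>) powr p"
  define fn where "fn n x = min (h x) (a + real n)" for n :: nat and x
  have fnm[measurable]: "fn n \<in> borel_measurable borel" for n unfolding fn_def by measurable
  have Xn: "(\<integral>\<^sup>+x. ennreal (indicator I x * fn n x powr p) \<partial>lborel) \<le> ennreal B" for n
  proof -
    define M where "M = a + real n"
    have fI: "fn n x = min (g x) M" if "x \<in> I" for x using hI[OF that] unfolding fn_def M_def by simp
    have fd: "fn n \<delta> = a" using fI[of \<delta>] dpos unfolding M_def a_def I_def by simp
    have mono: "fn n t \<le> fn n s" if "0 < s" "s \<le> t" "t \<le> \<delta>" for s t
      using fI[of s] fI[of t] that gmono[of s t] d1 unfolding I_def by (auto simp: min_def)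
    have hyp: "(\<integral>\<^sup>+x. ennreal (indicator {0<..t} x * fn n x) \<partial>lborel) \<le> ennreal (c * t * fn n t)"
      if t: "t \<in> {0<..\<delta>}" for t
    proof (cases "g t \<le> M")
      case True
      have t1: "t \<in> {0<..1}" using t d1 by auto
      have "(\<integral>\<^sup>+x. ennreal (indicator {0<..t} x * fn n x) \<partial>lborel) \<le> (\<integral>\<^sup>+x. ennreal (indicator {0<..t} x * g x) \<partial>lborel)"
      proof (intro nn_integral_mono)
        fix x show "ennreal (indicator {0<..t} x * fn n x) \<le> ennreal (indicator {0<..t} x * g x)"
        proof (cases "x \<in> {0<..t}")
          case True
          then have "x \<in> I" using t unfolding I_def by auto
          then show ?thesis using True fI by (intro ennreal_leI) simp
        qed simp
      qed
      also have "\<dots> = ennreal (\<integral>x. indicator {0<..t} x * g x \<partial>lborel)"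
      proof (rule nn_integral_eq_integral)
        show "integrable lborel (\<lambda>x. indicator {0<..t} x * g x)"
          using gint[OF t1] unfolding set_integrable_def by simp
        show "AE x in lborel. 0 \<le> indicator {0<..t} x * g x"
          using gpos t1 by (intro AE_I2) (auto simp: indicator_def less_imp_le)
      qed
      also have "(\<integral>x. indicator {0<..t} x * g x \<partial>lborel) = (LBINT u:{0<..t}. g u)"
        unfolding set_lebesgue_integral_def by simp
      also have "(LBINT u:{0<..t}. g u) \<le> c * t * g t"
        using gavg[OF t1] t1 by (simp add: field_simps)
      also have "g t = fn n t" using fI[of t] t True unfolding I_def by simp
      finally show ?thesis by (simp add: ennreal_leI)
    next
      case False
      then have fM: "fn n t = M" using fI[of t] t unfolding I_def by simp
      have M0: "M \<ge> 0" unfolding M_def using apos by simp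
      have "(\<integral>\<^sup>+x. ennreal (indicator {0<..t} x * fn n x) \<partial>lborel) \<le> (\<integral>\<^sup>+x. ennreal M * indicator {0<..t} x \<partial>lborel)"
      proof (intro nn_integral_mono)
        fix x show "ennreal (indicator {0<..t} x * fn n x) \<le> ennreal M * indicator {0<..t} x"
        proof (cases "x \<in> {0<..t}")
          case True
          then have "x \<in> I" using t unfolding I_def by auto
          then show ?thesis using True fI by (simp add: ennreal_leI)
        qed simp
      qed
      also have "\<dots> = ennreal (M * t)" using t M0 by (simp add: nn_integral_cmult_indicator ennreal_mult)
      also have "\<dots> \<le> ennreal (c * t * fn n t)" unfolding fM using t c1 M0
      proof (intro ennreal_leI)
        have "M * t \<le> (c * t) * M" using t c1 M0 mult_right_mono[of 1 c "t*M"] by (simp add: mult_ac)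
        then show "M * t \<le> c * t * M" by simp
      qed
      finally show ?thesis .
    qed
    have bnd: "fn n t \<le> M" if "t \<in> {0<..\<delta>}" for t using fI[of t] that unfolding I_def by simp
    note cr = core_real[OF fnm dpos cpos apos fd p1 kap mono hyp bnd]
    define Fn where "Fn = (\<integral>t. indicator {0<..\<delta>} t * fn n t \<partial>lborel)"
    have Fn0: "0 \<le> Fn" unfolding Fn_def
      using fI ga apos by (intro integral_nonneg_AE AE_I2) (auto simp: indicator_def I_def M_def intro: order_trans[OF less_imp_le])
    have FnG: "Fn \<le> G" unfolding Fn_def Geq I_def
    proof (rule integral_mono)
      show "integrable lborel (\<lambda>t. indicator {0<..\<delta>} t * fn n t)" by (rule cr(2))
      show "integrable lborel (\<lambda>x. indicator {0<..\<delta>} x * g x)" using Gint unfolding I_def .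
      fix x show "indicator {0<..\<delta>} x * fn n x \<le> indicator {0<..\<delta>} x * g x"
        using fI[of x] unfolding I_def by (auto simp: indicator_def)
    qed
    have "(\<integral>t. indicator {0<..\<delta>} t * fn n t powr p \<partial>lborel) \<le> \<delta> * K * (Fn/\<delta>) powr p"
      using cr(3) unfolding Fn_def K_def by (simp add: mult_ac)
    also have "\<dots> \<le> B" unfolding B_def
      using Fn0 FnG dpos Kpos p1 by (intro mult_left_mono powr_mono2 divide_right_mono) auto
    finally have XB: "(\<integral>t. indicator {0<..\<delta>} t * fn n t powr p \<partial>lborel) \<le> B" .
    have "(\<integral>\<^sup>+x. ennreal (indicator I x * fn n x powr p) \<partial>lborel) = ennreal (\<integral>t. indicator {0<..\<delta>} t * fn n t powr p \<partial>lborel)"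
      unfolding I_def by (rule nn_integral_eq_integral[OF cr(1)]) (auto intro!: AE_I2 simp: indicator_def)
    also have "\<dots> \<le> ennreal B" using XB by (rule ennreal_leI)
    finally show ?thesis .
  qed
  define Fs where "Fs n x = ennreal (indicator I x * fn n x powr p)" for n x
  have fnI: "fn n x = min (g x) (a + real n)" if "x \<in> I" for n x using hI[OF that] unfolding fn_def by simp
  have fnpos: "fn n x > 0" if "x \<in> I" for n x using fnI[OF that] ga[OF that] apos by simp
  have inc: "incseq Fs"
  proof (rule incseq_SucI, rule le_funI)
    fix n x show "Fs n x \<le> Fs (Suc n) x"
    proof (cases "x \<in> I")
      case True
      have "fn n x powr p \<le> fn (Suc n) x powr p"
        using fnI[OF True, of n] fnI[OF True, of "Suc n"] fnpos[OF True, of n] p1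
        by (intro powr_mono2) (auto simp: min_def)
      then show ?thesis using True unfolding Fs_def by (simp add: ennreal_leI)
    qed (simp add: Fs_def)
  qed
  have Fsm: "Fs n \<in> borel_measurable lborel" for n unfolding Fs_def I_def by measurable
  have sup: "(SUP n. Fs n x) = ennreal (indicator I x * g x powr p)" for x
  proof (cases "x \<in> I")
    case True
    obtain n :: nat where n: "g x \<le> real n" using real_arch_simple by blast
    have eqn: "Fs n x = ennreal (indicator I x * g x powr p)"
      using fnI[OF True, of n] n apos True unfolding Fs_def by simp
    show ?thesis
    proof (rule antisym)
      show "(SUP n. Fs n x) \<le> ennreal (indicator I x * g x powr p)"
      proof (rule SUP_least)
        fix m :: nat
        have "fn m x powr p \<le> g x powr p"
          using fnI[OF True, of m] fnpos[OF True, of m] p1 by (intro powr_mono2) auto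
        then show "Fs m x \<le> ennreal (indicator I x * g x powr p)"
          using True unfolding Fs_def by (simp add: ennreal_leI)
      qed
      show "ennreal (indicator I x * g x powr p) \<le> (SUP n. Fs n x)"
        unfolding eqn[symmetric] by (rule SUP_upper) simp
    qed
  qed (simp add: Fs_def)
  define V where "V = (\<integral>\<^sup>+x. ennreal (indicator I x * g x powr p) \<partial>lborel)"
  have "V = (\<integral>\<^sup>+x. (SUP n. Fs n x) \<partial>lborel)" unfolding V_def sup ..
  also have "\<dots> = (SUP n. (\<integral>\<^sup>+x. Fs n x \<partial>lborel))"
    by (rule nn_integral_monotone_convergence_SUP[OF inc Fsm])
  also have "\<dots> \<le> ennreal B" using Xn unfolding Fs_def by (intro SUP_least) auto
  finally have VB: "V \<le> ennreal B" .
  then have Vfin: "V \<noteq> \<infinity>" by (auto simp: top_unique)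
  define r where "r = enn2real V"
  have Vr: "V = ennreal r" unfolding r_def using Vfin by (simp add: ennreal_enn2real_if)
  have r0: "0 \<le> r" unfolding r_def by simp
  have gpm: "(\<lambda>x. indicator I x * g x powr p) \<in> borel_measurable lborel"
  proof -
    have "(\<lambda>x. indicator I x * g x powr p) = (\<lambda>x. indicator I x * h x powr p)"
      using hI by (auto simp: fun_eq_iff indicator_def)
    also have "\<dots> \<in> borel_measurable lborel" unfolding I_def by measurable
    finally show ?thesis .
  qed
  have gnn: "AE x in lborel. 0 \<le> indicator I x * g x powr p" by (intro AE_I2) (auto simp: indicator_def)
  have gpint: "integrable lborel (\<lambda>x. indicator I x * g x powr p)"
    by (rule integrableI_nn_integral_finite[OF gpm gnn]) (use Vr V_def in simp)
  have "ennreal (\<integral>x. indicator I x * g x powr p \<partial>lborel) = ennreal r"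
    using nn_integral_eq_integral[OF gpint gnn] Vr V_def by simp
  then have Xr: "(\<integral>x. indicator I x * g x powr p \<partial>lborel) = r"
    using r0 by (subst (asm) ennreal_inj) (auto intro: integral_nonneg_AE[OF gnn])
  have rB: "r \<le> B" using VB Vr r0 Kpos dpos unfolding B_def by (simp add: ennreal_le_iff)
  show ?thesis unfolding power_avg_ineq_def
  proof
    show "set_integrable lborel {0<..\<delta>} (\<lambda>u. g u powr p)"
      using gpint unfolding set_integrable_def I_def by simp
    have "(LBINT u:{0<..\<delta>}. g u powr p) = r" using Xr unfolding set_lebesgue_integral_def I_def by simp
    moreover have "(LBINT u:{0<..\<delta>}. g u) = G" unfolding G_def I_def ..
    ultimately show "1 / \<delta> * (LBINT u:{0<..\<delta>}. g u powr p)
        \<le> 1 / (c powr (p - 1) * (c + p - p * c)) * (1 / \<delta> * (LBINT u:{0<..\<delta>}. g u)) powr p"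
      using rB dpos unfolding B_def K_def by (simp add: field_simps)
  qed
qed


lemma powint:
  fixes t b :: real
  assumes t: "t > 0" and b: "b > -1"
  shows "set_integrable lborel {0<..t} (\<lambda>u. u powr b)" "(LBINT u:{0<..t}. u powr b) = t powr (b+1) / (b+1)"
proof -
  define v where "v = t powr (b+1) / (b+1)"
  have v0: "v \<ge> 0" unfolding v_def using b by simp
  have h0: "((\<lambda>x. x powr b) has_integral v) {0..t}" unfolding v_def
    using has_integral_powr_from_0[OF b] t by simp
  have h1: "((\<lambda>x. x powr b) has_integral v) {0<..t}"
  proof (subst has_integral_spike_set_eq[of "{0<..t}" "{0..t}"])
    have "{x \<in> {0<..t} - {0..t}. x powr b \<noteq> 0} = {}" by auto
    then show "negligible {x \<in> {0<..t} - {0..t}. x powr b \<noteq> 0}" by (simp only: negligible_empty)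
    show "negligible {x \<in> {0..t} - {0<..t}. x powr b \<noteq> 0}"
      by (rule negligible_subset[OF negligible_sing[of 0]]) auto
  qed (rule h0)
  have h2: "((\<lambda>x. indicator {0<..t} x * x powr b) has_integral v) UNIV"
  proof -
    have "(\<lambda>x. indicator {0<..t} x * x powr b) = (\<lambda>x. if x \<in> {0<..t} then x powr b else 0)"
      by (auto simp: fun_eq_iff indicator_def)
    then show ?thesis using h1 has_integral_restrict_UNIV[of "{0<..t}" "\<lambda>x. x powr b" v] by simp
  qed
  have m: "(\<lambda>x. indicator {0<..t} x * x powr b) \<in> borel_measurable borel" by measurable
  have nn: "(\<integral>\<^sup>+x. ennreal (indicator {0<..t} x * x powr b) \<partial>lborel) = ennreal v"
    by (rule nn_integral_has_integral_lborel[OF m _ h2]) simp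
  have "integrable lborel (\<lambda>x. indicator {0<..t} x * x powr b) \<and> (\<integral>x. indicator {0<..t} x * x powr b \<partial>lborel) = v"
    using nn v0 by (subst nn_integral_eq_integrable[symmetric]) (auto simp: m)
  then show "set_integrable lborel {0<..t} (\<lambda>u. u powr b)" "(LBINT u:{0<..t}. u powr b) = t powr (b+1) / (b+1)"
    unfolding set_integrable_def set_lebesgue_integral_def v_def by simp_all
qed


lemma p1_case:
  assumes c1: "c \<ge> 1" and adm: "admissible c g" and dI: "\<delta> \<in> {0<..1}"
  shows "power_avg_ineq (1 / (c powr (1 - 1) * (c + 1 - 1 * c))) 1 g \<delta>"
proof -
  have gpos: "\<And>t. t \<in> {0<..1} \<Longrightarrow> g t > 0"
    and gint: "\<And>t. t \<in> {0<..1} \<Longrightarrow> set_integrable lborel {0<..t} g"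
    using adm unfolding admissible_def by auto
  have eq: "(\<lambda>x. indicator {0<..\<delta>} x *\<^sub>R g x powr 1) = (\<lambda>x. indicator {0<..\<delta>} x *\<^sub>R g x)"
  proof
    fix x show "indicator {0<..\<delta>} x *\<^sub>R g x powr 1 = indicator {0<..\<delta>} x *\<^sub>R g x"
      using gpos[of x] dI by (cases "x \<in> {0<..\<delta>}") (auto simp: powr_one)
  qed
  have si: "set_integrable lborel {0<..\<delta>} (\<lambda>u. g u powr 1)"
    using gint[OF dI] unfolding set_integrable_def eq .
  have li: "(LBINT u:{0<..\<delta>}. g u powr 1) = (LBINT u:{0<..\<delta>}. g u)"
    unfolding set_lebesgue_integral_def eq ..
  have G0: "0 \<le> (LBINT u:{0<..\<delta>}. g u)"
    unfolding set_lebesgue_integral_def using gpos dI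
    by (intro integral_nonneg_AE AE_I2) (auto simp: indicator_def less_imp_le)
  have d0: "\<delta> > 0" using dI by simp
  show ?thesis unfolding power_avg_ineq_def
    using si li G0 d0 c1 by (simp add: powr_one)
qed

lemma sharp_c1:
  fixes p K :: real
  assumes "K < 1"
  shows "\<exists>g \<delta>. admissible 1 g \<and> \<delta> \<in> {0<..1} \<and> \<not> power_avg_ineq K p g \<delta>"
proof (intro exI conjI)
  have si: "set_integrable lborel {0<..t} (\<lambda>u. 1::real)" if "t > 0" for t :: real
    unfolding set_integrable_def using that by simp
  have li: "(LBINT u:{0<..t}. (1::real)) = t" if "t > 0" for t :: real
    unfolding set_lebesgue_integral_def using that by simp
  show "admissible 1 (\<lambda>_. 1)" unfolding admissible_def using si li by auto
  show "(1::real) \<in> {0<..1}" by simp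
  show "\<not> power_avg_ineq K p (\<lambda>_. 1) 1" unfolding power_avg_ineq_def using li[of 1] assms by simp
qed

lemma sharp_c:
  fixes c p K :: real
  assumes c1: "c > 1" and p1: "p \<ge> 1" and pc: "p < c / (c - 1)"
  assumes K: "K < 1 / (c powr (p - 1) * (c + p - p * c))"
  shows "\<exists>g \<delta>. admissible c g \<and> \<delta> \<in> {0<..1} \<and> \<not> power_avg_ineq K p g \<delta>"
proof (intro exI conjI)
  define \<alpha> where "\<alpha> = 1 - 1/c"
  have a0: "0 < \<alpha>" "\<alpha> < 1" unfolding \<alpha>_def using c1 by auto
  have ca: "1 - \<alpha> = 1 / c" unfolding \<alpha>_def by simp
  have ap: "\<alpha> * p < 1"
  proof -
    have "p * (c - 1) < c" using pc c1 by (simp add: field_simps)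
    then show ?thesis unfolding \<alpha>_def using c1 by (simp add: field_simps)
  qed
  define g where "g t = t powr (-\<alpha>)" for t :: real
  have gi: "set_integrable lborel {0<..t} g" "(LBINT u:{0<..t}. g u) = t powr (1 - \<alpha>) / (1 - \<alpha>)"
    if "t > 0" for t
    using powint[OF that, of "-\<alpha>"] a0 unfolding g_def by simp_all
  show "admissible c g" unfolding admissible_def
  proof (intro conjI ballI impI)
    fix t :: real assume t: "t \<in> {0<..1}"
    then show "g t > 0" unfolding g_def by simp
    show "set_integrable lborel {0<..t} g" using gi t by simp
    have "1 / t * (LBINT u:{0<..t}. g u) = t powr (1 - \<alpha>) / t * c" using gi(2)[of t] t ca by simp
    also have "t powr (1 - \<alpha>) / t = g t" unfolding g_def using t by (simp add: powr_diff powr_minus_divide)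
    finally show "1 / t * (LBINT u:{0<..t}. g u) \<le> c * g t" by simp
  next
    fix s t :: real assume "s \<in> {0<..1}" "t \<in> {0<..1}" "s \<le> t"
    then show "g t \<le> g s" unfolding g_def using a0 by (intro powr_mono2') auto
  qed
  show "(1::real) \<in> {0<..1}" by simp
  show "\<not> power_avg_ineq K p g 1"
  proof
    assume H: "power_avg_ineq K p g 1"
    have eqf: "(\<lambda>u. g u powr p) = (\<lambda>u. u powr (-(\<alpha> * p)))" unfolding g_def by (simp add: powr_powr)
    have "(LBINT u:{0<..1}. g u powr p) = 1 / (1 - \<alpha> * p)"
      unfolding eqf using powint(2)[of 1 "-(\<alpha>*p)"] ap by simp
    moreover have "(LBINT u:{0<..1}. g u) = c" using gi(2)[of 1] ca by simp
    ultimately have L: "1 / (1 - \<alpha> * p) \<le> K * c powr p" using H unfolding power_avg_ineq_def by simp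
    have E: "1 / (1 - \<alpha> * p) = 1 / (c powr (p - 1) * (c + p - p * c)) * c powr p"
    proof -
      have e1: "1 - \<alpha> * p = (c + p - p * c) / c" unfolding \<alpha>_def using c1 by (simp add: field_simps)
      have e2: "c powr p = c * c powr (p - 1)" using c1 powr_mult_base[of c "p-1"] by simp
      have "0 < (c + p - p * c) / c" using ap e1 by linarith
      then have "c + p - p * c > 0" using c1 by (simp add: zero_less_divide_iff)
      moreover have "c powr (p - 1) > 0" using c1 by simp
      moreover have "\<And>X D::real. X > 0 \<Longrightarrow> D > 0 \<Longrightarrow> 1 / (D / c) = 1 / (X * D) * (c * X)"
        using c1 by (simp add: field_simps)
      ultimately show ?thesis unfolding e1 e2 by blast
    qed
    have cp: "c powr p > 0" using c1 by simp
    have "1 / (c powr (p - 1) * (c + p - p * c)) * c powr p \<le> K * c powr p" using L unfolding E .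
    then have "1 / (c powr (p - 1) * (c + p - p * c)) \<le> K" using cp by (simp only: mult_le_cancel_right_pos)
    then show False using K by simp
  qed
qed


theorem lemma2:
  fixes c p :: real
  assumes "c \<ge> 1" and "p \<ge> 1" and "c = 1 \<or> p < c / (c - 1)"
  shows "(\<forall>g \<delta>. admissible c g \<longrightarrow> \<delta> \<in> {0<..1} \<longrightarrow>
            power_avg_ineq (1 / (c powr (p - 1) * (c + p - p * c))) p g \<delta>)
       \<and> (\<forall>K < 1 / (c powr (p - 1) * (c + p - p * c)).
            \<exists>g \<delta>. admissible c g \<and> \<delta> \<in> {0<..1} \<and> \<not> power_avg_ineq K p g \<delta>)"
proof (intro conjI allI impI)
  fix g :: "real \<Rightarrow> real" and \<delta> :: real
  assume adm: "admissible c g" and dI: "\<delta> \<in> {0<..1}"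
  show "power_avg_ineq (1 / (c powr (p - 1) * (c + p - p * c))) p g \<delta>"
  proof (cases "p = 1")
    case True
    show ?thesis unfolding True by (rule p1_case[OF assms(1) adm dI])
  next
    case False
    then have p1: "p > 1" using assms(2) by simp
    have kap: "c * (p - 1) < p"
    proof (cases "c = 1")
      case False
      then have "c > 1" using assms(1) by simp
      then have "p * (c - 1) < c" using assms(3) False by (simp add: field_simps)
      then show ?thesis by (simp add: algebra_simps)
    qed simp
    show ?thesis by (rule main_ineq[OF assms(1) p1 kap adm dI])
  qed
next
  fix K :: real assume K: "K < 1 / (c powr (p - 1) * (c + p - p * c))"
  show "\<exists>g \<delta>. admissible c g \<and> \<delta> \<in> {0<..1} \<and> \<not> power_avg_ineq K p g \<delta>"
  proof (cases "c = 1")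
    case True
    then have "K < 1" using K by simp
    then show ?thesis unfolding True by (rule sharp_c1)
  next
    case False
    then have c1: "c > 1" using assms(1) by simp
    then have "p < c / (c - 1)" using assms(3) by simp
    then show ?thesis by (rule sharp_c[OF c1 assms(2) _ K])
  qed
qed


end
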